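(* We have \[ H(n, k) = \sum_{v = 0}^{s - t - 1} H_p(d_0, \ldots, d_{t + v + 1})\cdot p^{v - ks + U_p(k)} + O\big(p^{s - t - ks + U_p(k)}\big) . \]
   Context: For integers $n \geq k \geq 1$, $H(n,k) := \sum_{1 \leq i_1 < \cdots < i_k \leq n} \frac{1}{i_1 \cdots i_k}$. Fix a prime $p$. For digits $a_0,\ldots,a_v \in \{0,\ldots,p-1\}$ with $a_0 \neq 0$, write $\langle a_0, \ldots, a_v \rangle_p := \sum_{i=0}^v a_i p^{v-i}$ (base $p$ representation). Let $k = \langle e_0, \ldots, e_t \rangle_p + 1 \geq 2$ and $n = \langle d_0, \ldots, d_s \rangle_p$ with $s \geq t+1$ and $d_i = e_i$ for $i = 0,\ldots,t$. For $a_0,\ldots,a_v \in \{0,\ldots,p-1\}$ put $B_p(a_0,\ldots,a_v) := \langle a_0,\ldots,a_v\rangle_p - \langle a_0,\ldots,a_{v-1}\rangle_p$ (with $\langle a_0,\ldots,a_{v-1}\rangle_p = 0$ if $v=0$), and $\mathcal{B}_p(a_0,\ldots,a_v) := \{c_p(i) : i = 1,\ldots,B_p(a_0,\ldots,a_v)\}$, where $c_p(1) < c_p(2) < \cdots$ is the sequence of all positive integers not divisible by $p$. For $v \geq 0$ let $\mathcal{A}_p(n,v) := \{m \in \{1,\ldots,n\} : \nu_p(m) = s - v\}$. Let $\mathcal{C}_p(n,k) := \bigcup_{v=0}^t \mathcal{A}_p(n,v)$ and $\Pi_p(k) := \prod_{j \in \mathcal{C}_p(n,k)} \frac{1}{j/p^{\nu_p(j)}}$,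 i.e. the product of the reciprocals of the $p$-free parts $j/p^{\nu_p(j)}$ of the elements $j \in \mathcal{C}_p(n,k)$ (this depends only on $p$ and $k$). Put $U_p(k) := \sum_{v=0}^t B_p(e_0,\ldots,e_v)\, v + t + 1$. For $a_0,\ldots,a_{t+v+1} \in \{0,\ldots,p-1\}$ with $v \geq 0$ and $a_i = e_i$ for $i=0,\ldots,t$, set \[ H_p^\prime(a_0,\ldots,a_{t+v}) := \sum_{\substack{0 \leq v_1,\ldots,v_k \leq t+v \\ v_1+\cdots+v_k = U_p(k)+v}} \; \sum_{\substack{j_1/p^{v_1} < \cdots < j_k/p^{v_k} \\ j_1 \in \mathcal{B}_p(a_0,\ldots,a_{v_1}),\ldots, j_k \in \mathcal{B}_p(a_0,\ldots,a_{v_k})}} \frac{1}{j_1\cdots j_k} \] and \[ H_p(a_0,\ldots,a_{t+v+1}) := H_p^\prime(a_0,\ldots,a_{t+v}) + \Pi_p(k) \sum_{j \in \mathcal{B}_p(a_0,\ldots,a_{t+v+1})} \frac{1}{j}. \] $O(p^v)$ denotes a rational number with $p$-adic valuation at least $v$. *)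

theory Defs
  imports Complex_Main "HOL-Library.Infinite_Set" "HOL-Library.FuncSet"
    "HOL-Computational_Algebra.Primes"
begin

text \<open>Harmonic-type sum H(n,k): sum over k-element subsets of {1..n} (i.e. over i_1 < ... < i_k).\<close>
definition Hnk :: "nat \<Rightarrow> nat \<Rightarrow> rat" where
  "Hnk n k = (\<Sum>S\<in>{S. S \<subseteq> {1..n} \<and> card S = k}. 1 / (\<Prod>i\<in>S. of_nat i))"

text \<open>Base-p value of digits a_0,...,a_v (a_0 most significant).\<close>
definition numval :: "nat \<Rightarrow> (nat \<Rightarrow> nat) \<Rightarrow> nat \<Rightarrow> nat" where
  "numval p a v = (\<Sum>i=0..v. a i * p ^ (v - i))"

definition Bp :: "nat \<Rightarrow> (nat \<Rightarrow> nat) \<Rightarrow> nat \<Rightarrow> nat" where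
  "Bp p a v = numval p a v - (if v = 0 then 0 else numval p a (v - 1))"

text \<open>c_p(i), i \<ge> 1: the i-th positive integer not divisible by p.\<close>
definition cp :: "nat \<Rightarrow> nat \<Rightarrow> nat" where
  "cp p i = enumerate {m. 0 < m \<and> \<not> p dvd m} (i - 1)"

definition Bset :: "nat \<Rightarrow> (nat \<Rightarrow> nat) \<Rightarrow> nat \<Rightarrow> nat set" where
  "Bset p a v = {cp p i | i. 1 \<le> i \<and> i \<le> Bp p a v}"

text \<open>A_p(n,v) and C_p(n,k) (s is the index of the last digit of n, t that of k-1).\<close>
definition Ap :: "nat \<Rightarrow> nat \<Rightarrow> nat \<Rightarrow> nat \<Rightarrow> nat set" where
  "Ap p n s v = {m \<in> {1..n}. multiplicity p m = s - v}"

definition Cp :: "nat \<Rightarrow> nat \<Rightarrow> nat \<Rightarrow> nat \<Rightarrow> nat set" where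
  "Cp p n s t = (\<Union>v\<in>{0..t}. Ap p n s v)"

definition Pip :: "nat \<Rightarrow> nat \<Rightarrow> nat \<Rightarrow> nat \<Rightarrow> rat" where
  "Pip p n s t = (\<Prod>j\<in>Cp p n s t. 1 / of_nat (j div p ^ multiplicity p j))"

text \<open>U_p(k), with e the digits e_0..e_t of k-1.\<close>
definition Up :: "nat \<Rightarrow> nat \<Rightarrow> (nat \<Rightarrow> nat) \<Rightarrow> nat" where
  "Up p t e = (\<Sum>v=0..t. Bp p e v * v) + t + 1"

definition Hprime :: "nat \<Rightarrow> nat \<Rightarrow> nat \<Rightarrow> (nat \<Rightarrow> nat) \<Rightarrow> (nat \<Rightarrow> nat) \<Rightarrow> nat \<Rightarrow> rat" where
  "Hprime p k t e a v =
    (\<Sum>vs\<in>{vs \<in> {1..k} \<rightarrow>\<^sub>E {0..t+v}. (\<Sum>i\<in>{1..k}. vs i) = Up p t e + v}.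
       \<Sum>js\<in>{js \<in> (\<Pi>\<^sub>E i\<in>{1..k}. Bset p a (vs i)).
               \<forall>i\<in>{1..<k}. (of_nat (js i) / of_nat p ^ vs i :: rat)
                              < of_nat (js (i+1)) / of_nat p ^ vs (i+1)}.
         1 / (\<Prod>i\<in>{1..k}. of_nat (js i)))"

definition Hp :: "nat \<Rightarrow> nat \<Rightarrow> nat \<Rightarrow> nat \<Rightarrow> nat \<Rightarrow> (nat \<Rightarrow> nat) \<Rightarrow> (nat \<Rightarrow> nat) \<Rightarrow> nat \<Rightarrow> rat" where
  "Hp p n s t k e a v = Hprime p k t e a v
     + Pip p n s t * (\<Sum>j\<in>Bset p a (t+v+1). 1 / of_nat j)"

text \<open>q = O(p^e): q has p-adic valuation at least e (q = 0 allowed).\<close>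
definition padic_ge :: "nat \<Rightarrow> rat \<Rightarrow> int \<Rightarrow> bool" where
  "padic_ge p q e \<longleftrightarrow> (\<exists>a b :: int. b \<noteq> 0 \<and> \<not> int p dvd b \<and>
      q = of_int a / of_int b * of_nat p powi e)"

end

theory Submission
  imports Defs
begin


lemma numval_Suc: "numval p a (Suc v) = numval p a v * p + a (Suc v)"
proof -
  have "numval p a (Suc v) = (\<Sum>i=0..v. a i * p ^ (Suc v - i)) + a (Suc v)"
    unfolding numval_def by simp
  also have "(\<Sum>i=0..v. a i * p ^ (Suc v - i)) = (\<Sum>i=0..v. (a i * p ^ (v - i)) * p)"
    by (intro sum.cong) (auto simp: Suc_diff_le)
  also have "\<dots> = (\<Sum>i=0..v. a i * p ^ (v - i)) * p"
    by (simp only: sum_distrib_right)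
  finally show ?thesis unfolding numval_def by simp
qed

lemma numval_0[simp]: "numval p a 0 = a 0"
  unfolding numval_def by simp

lemma numval_lt: "(\<forall>i\<le>v. a i < p) \<Longrightarrow> numval p a v < p ^ Suc v"
proof (induction v)
  case 0 then show ?case by simp
next
  case (Suc v)
  then have h: "numval p a v < p ^ Suc v" "a (Suc v) < p" by auto
  have "numval p a v * p + a (Suc v) < (numval p a v + 1) * p" using h by simp
  also have "\<dots> \<le> p ^ Suc v * p" using h by (intro mult_right_mono) auto
  finally show ?case by (simp add: numval_Suc mult.commute)
qed

lemma numval_ge: "numval p a v \<ge> a 0 * p ^ v"
  unfolding numval_def using member_le_sum[of 0 "{0..v}" "\<lambda>i. a i * p ^ (v - i)"] by simp

lemma numval_div_p: "a (Suc v) < p \<Longrightarrow> numval p a (Suc v) div p = numval p a v"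
  by (simp add: numval_Suc)

lemma numval_div: "(\<forall>i\<le>s. a i < p) \<Longrightarrow> w \<le> s \<Longrightarrow> numval p a s div p ^ (s - w) = numval p a w"
proof (induction s)
  case 0 then show ?case by simp
next
  case (Suc s)
  show ?case
  proof (cases "w = Suc s")
    case True then show ?thesis by simp
  next
    case False
    then have "w \<le> s" using Suc by simp
    have "Suc s - w = Suc (s - w)" using \<open>w \<le> s\<close> by simp
    then have "numval p a (Suc s) div p ^ (Suc s - w) = numval p a (Suc s) div p div p ^ (s - w)"
      by (simp add: div_mult2_eq)
    also have "\<dots> = numval p a s div p ^ (s - w)" using Suc.prems by (simp add: numval_div_p)
    also have "\<dots> = numval p a w" using Suc \<open>w \<le> s\<close> by simp
    finally show ?thesis .
  qed
qed

lemma count_mult: "0 < q \<Longrightarrow> card {x\<in>{1..N}. q dvd x} = N div (q::nat)"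
proof -
  assume q: "0 < q"
  have "{x\<in>{1..N}. q dvd x} = (\<lambda>i. q*i) ` {1..N div q}"
  proof (intro equalityI subsetI)
    fix x assume "x \<in> {x\<in>{1..N}. q dvd x}"
    then have "1 \<le> x" "x \<le> N" "q dvd x" by auto
    then obtain i where "x = q*i" by (auto elim: dvdE)
    then have "i \<le> N div q" using q \<open>x \<le> N\<close> by (simp add: less_eq_div_iff_mult_less_eq mult.commute)
    moreover have "1 \<le> i" using \<open>x = q*i\<close> \<open>1 \<le> x\<close> by (cases i) auto
    ultimately have "i \<in> {1..N div q}" by auto
    then show "x \<in> (\<lambda>i. q*i) ` {1..N div q}" using \<open>x = q*i\<close> by auto
  next
    fix x assume "x \<in> (\<lambda>i. q*i) ` {1..N div q}"
    then obtain i where "i \<in> {1..N div q}" "x = q*i" by (rule imageE)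
    then have "x = q*i" "1 \<le> i" "i \<le> N div q" by auto
    then have "q*i \<le> N" using q by (simp add: less_eq_div_iff_mult_less_eq mult.commute)
    moreover have "1 \<le> q*i" using q \<open>1 \<le> i\<close> by simp
    ultimately show "x \<in> {x\<in>{1..N}. q dvd x}" using \<open>x = q*i\<close> by auto
  qed
  moreover have "inj_on (\<lambda>i. q*i) {1..N div q}" using q by (auto simp: inj_on_def)
  ultimately show ?thesis by (simp add: card_image)
qed

lemma count_nonmult: "0 < q \<Longrightarrow> card {x. 0 < x \<and> \<not> q dvd x \<and> x \<le> N} = N - N div (q::nat)"
proof -
  assume q: "0 < q"
  have "{x. 0 < x \<and> \<not> q dvd x \<and> x \<le> N} = {1..N} - {x\<in>{1..N}. q dvd x}" by auto
  moreover have "card ({1..N} - {x\<in>{1..N}. q dvd x}) = card {1..N} - card {x\<in>{1..N}. q dvd x}"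
    by (rule card_Diff_subset) auto
  ultimately show ?thesis using count_mult[OF q, of N] by simp
qed

lemma enum_init:
  fixes X :: "nat set"
  assumes inf: "infinite X"
  shows "{enumerate X i | i. i < card {x\<in>X. x \<le> N}} = {x\<in>X. x \<le> N}"
proof -
  define I where "I = {i. enumerate X i \<le> N}"
  have inj: "inj (enumerate X)" using strict_mono_enumerate[OF inf] strict_mono_imp_inj_on by blast
  have img: "enumerate X ` I = {x\<in>X. x \<le> N}"
  proof (intro equalityI subsetI)
    fix x assume "x \<in> enumerate X ` I" then show "x \<in> {x\<in>X. x \<le> N}"
      using enumerate_in_set[OF inf] I_def by auto
  next
    fix x assume "x \<in> {x\<in>X. x \<le> N}"
    then obtain i where "enumerate X i = x" using enumerate_Ex[OF inf] by blast
    then show "x \<in> enumerate X ` I" using \<open>x \<in> {x\<in>X. x \<le> N}\<close> I_def by auto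
  qed
  have finI: "finite I"
  proof -
    have "finite {..N}" by simp
    then have "finite (enumerate X -` {..N})" using inj by (simp add: finite_vimageI)
    moreover have "I = enumerate X -` {..N}" unfolding I_def by auto
    ultimately show ?thesis by simp
  qed
  have "card (enumerate X ` I) = card I" by (rule card_image[OF inj_on_subset[OF inj subset_UNIV]])
  then have cI: "card I = card {x\<in>X. x \<le> N}" using img by simp
  have down: "j \<in> I" if "i \<in> I" "j \<le> i" for i j
  proof -
    have "enumerate X j \<le> enumerate X i" using that(2) inf by simp
    then show ?thesis using that(1) unfolding I_def by simp
  qed
  have sub: "I \<subseteq> {..<card I}"
  proof
    fix i assume "i \<in> I"
    then have "{..i} \<subseteq> I" using down by auto
    then have "card {..i} \<le> card I" using finI by (rule card_mono[rotated])
    then show "i \<in> {..<card I}" by simp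
  qed
  then have "I = {..<card I}" using finI by (intro card_subset_eq) auto
  then have "I = {i. i < card {x\<in>X. x \<le> N}}" using cI by auto
  with img show ?thesis by auto
qed




locale L =
  fixes p n s t :: nat and d e :: "nat \<Rightarrow> nat"
  assumes prime: "prime p" and dlt: "\<forall>i\<le>s. d i < p" and d0: "d 0 \<noteq> 0"
    and n_def: "n = numval p d s" and st: "s \<ge> t + 1" and de: "\<forall>i\<le>t. d i = e i"
begin

definition lev :: "nat \<Rightarrow> nat" where "lev m = s - multiplicity p m"
definition pf :: "nat \<Rightarrow> nat" where "pf m = m div p ^ multiplicity p m"
definition Lev :: "nat \<Rightarrow> nat set" where "Lev w = {m\<in>{1..n}. lev m = w}"
definition J :: "nat \<Rightarrow> nat set" where "J w = {j. 0 < j \<and> \<not> p dvd j \<and> j \<le> numval p d w}"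

lemma p2: "p \<ge> 2" using prime by (simp add: prime_ge_2_nat)
lemma p0: "p > 0" using p2 by simp

lemma n_lt: "n < p ^ Suc s" using numval_lt[of s d p] dlt n_def by simp

lemma mult_le: assumes "m \<in> {1..n}" shows "multiplicity p m \<le> s"
proof -
  have "p ^ multiplicity p m dvd m" by (rule multiplicity_dvd)
  then have "p ^ multiplicity p m \<le> m" using assms by (auto intro: dvd_imp_le)
  also have "\<dots> < p ^ Suc s" using assms n_lt by simp
  finally have lt: "p ^ multiplicity p m < p ^ Suc s" .
  have "1 < p" using p2 by simp
  from power_less_imp_less_exp[OF this lt] have "multiplicity p m < Suc s" .
  then show ?thesis by simp
qed

lemma decomp: "m = p ^ multiplicity p m * pf m"
  unfolding pf_def using multiplicity_dvd[of p m] by simp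

lemma pf_ndvd: "m > 0 \<Longrightarrow> \<not> p dvd pf m"
  unfolding pf_def by (rule multiplicity_decompose) (use prime in auto)

lemma pf_pos: "m > 0 \<Longrightarrow> pf m > 0"
  using decomp[of m] by (metis gr0I mult_0_right)

lemma mult_pow: assumes "\<not> p dvd j" shows "multiplicity p (p ^ r * j) = r"
  by (rule multiplicity_decomposeI[OF refl assms]) (use p0 in simp)

lemma pf_pow: assumes "\<not> p dvd j" shows "pf (p ^ r * j) = j"
  unfolding pf_def mult_pow[OF assms] using p0 by simp

lemma numval_div_le: "w \<le> s \<Longrightarrow> n div p ^ (s - w) = numval p d w"
  using numval_div[of s d p w] dlt n_def by simp

lemma Bp_card: assumes "w \<le> s" shows "Bp p d w = card (J w)"
proof -
  have "card (J w) = numval p d w - numval p d w div p"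
    unfolding J_def using count_nonmult[OF p0] by simp
  moreover have "numval p d w div p = (if w = 0 then 0 else numval p d (w - 1))"
  proof (cases w)
    case 0 then show ?thesis using dlt by simp
  next
    case (Suc w') then show ?thesis using dlt assms numval_div_p[of d w' p] by simp
  qed
  ultimately show ?thesis unfolding Bp_def by simp
qed

lemma X_inf: "infinite {m. 0 < m \<and> \<not> p dvd m}"
  unfolding infinite_nat_iff_unbounded_le
proof
  fix m
  have "\<not> p dvd (m * p + 1)"
  proof
    assume "p dvd m * p + 1" then have "p dvd 1" using dvd_add_right_iff[of p "m*p" 1] by simp
    then show False using p2 by simp
  qed
  moreover have "m \<le> m * p + 1" using p0 by (simp add: le_SucI)
  ultimately show "\<exists>n\<ge>m. n \<in> {m. 0 < m \<and> \<not> p dvd m}" by auto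
qed

lemma Bset_eq: assumes "w \<le> s" shows "Bset p d w = J w"
proof -
  define X where "X = {m. 0 < m \<and> \<not> p dvd m}"
  have JX: "J w = {x\<in>X. x \<le> numval p d w}" unfolding J_def X_def by auto
  have "Bset p d w = {enumerate X i | i. i < Bp p d w}"
    unfolding Bset_def cp_def X_def[symmetric]
  proof (intro equalityI subsetI)
    fix x assume "x \<in> {enumerate X (i - 1) |i. 1 \<le> i \<and> i \<le> Bp p d w}"
    then obtain i where "x = enumerate X (i - 1)" "1 \<le> i" "i \<le> Bp p d w" by blast
    then show "x \<in> {enumerate X i |i. i < Bp p d w}" by (intro CollectI exI[of _ "i - 1"]) auto
  next
    fix x assume "x \<in> {enumerate X i |i. i < Bp p d w}"
    then obtain i where "x = enumerate X i" "i < Bp p d w" by blast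
    then show "x \<in> {enumerate X (i - 1) |i. 1 \<le> i \<and> i \<le> Bp p d w}"
      by (intro CollectI exI[of _ "Suc i"]) auto
  qed
  also have "\<dots> = J w" unfolding Bp_card[OF assms] JX
    by (rule enum_init) (use X_inf X_def in simp)
  finally show ?thesis .
qed

lemma J_fin: "finite (J w)" unfolding J_def by auto

lemma Lev_eq: assumes "w \<le> s" shows "Lev w = (\<lambda>j. p ^ (s - w) * j) ` J w"
proof (intro equalityI subsetI)
  fix m assume m: "m \<in> Lev w"
  then have m1: "m \<in> {1..n}" and lm: "lev m = w" unfolding Lev_def by auto
  have ml: "multiplicity p m = s - w" using mult_le[OF m1] lm unfolding lev_def by simp
  have md: "m = p ^ (s - w) * pf m" using decomp[of m] ml by simp
  have "pf m \<in> J w"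
  proof -
    have "p ^ (s - w) * pf m \<le> n" using md m1 by simp
    then have "pf m \<le> n div p ^ (s - w)" using p0 by (simp add: less_eq_div_iff_mult_less_eq mult.commute)
    then show ?thesis unfolding J_def using numval_div_le[OF assms] pf_ndvd pf_pos m1 by auto
  qed
  then show "m \<in> (\<lambda>j. p ^ (s - w) * j) ` J w" using md by blast
next
  fix m assume "m \<in> (\<lambda>j. p ^ (s - w) * j) ` J w"
  then obtain j where j: "j \<in> J w" "m = p ^ (s - w) * j" by blast
  then have jj: "0 < j" "\<not> p dvd j" "j \<le> n div p ^ (s - w)" unfolding J_def using numval_div_le[OF assms] by auto
  have "m \<le> n" using jj(3) j(2) p0 by (simp add: less_eq_div_iff_mult_less_eq mult.commute)
  moreover have "m \<ge> 1" using jj(1) j(2) p0 by simp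
  moreover have "lev m = w" unfolding lev_def j(2) mult_pow[OF jj(2)] using assms by simp
  ultimately show "m \<in> Lev w" unfolding Lev_def by auto
qed

lemma Lev_inj: "inj_on (\<lambda>j. p ^ (s - w) * j) A" using p0 by (auto simp: inj_on_def)

lemma card_Lev: assumes "w \<le> s" shows "card (Lev w) = Bp p d w"
  unfolding Lev_eq[OF assms] Bp_card[OF assms] by (rule card_image[OF Lev_inj])

lemma pf_Lev: assumes "w \<le> s" "m \<in> Lev w" shows "pf m \<in> J w" "m = p ^ (s - w) * pf m"
proof -
  obtain j where "j \<in> J w" "m = p ^ (s - w) * j" using assms Lev_eq by blast
  moreover then have "pf m = j" using pf_pow unfolding J_def by auto
  ultimately show "pf m \<in> J w" "m = p ^ (s - w) * pf m" by auto
qed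

end



lemma numval_cong: "(\<forall>i\<le>v. a i = b i) \<Longrightarrow> numval p a v = numval p b v"
  unfolding numval_def by (intro sum.cong) auto

lemma Bp_cong: "(\<forall>i\<le>v. a i = b i) \<Longrightarrow> Bp p a v = Bp p b v"
  unfolding Bp_def using numval_cong[of v a b p] numval_cong[of "v - 1" a b p] by auto

lemma padic_ge_0: "prime p \<Longrightarrow> padic_ge p 0 e"
  unfolding padic_ge_def by (rule exI[of _ 0], rule exI[of _ 1]) (auto simp: prime_gt_1_nat)

lemma padic_ge_add:
  assumes "prime p" "padic_ge p x e" "padic_ge p y e"
  shows "padic_ge p (x + y) e"
proof -
  obtain a b where ab: "b \<noteq> 0" "\<not> int p dvd b" "x = of_int a / of_int b * of_nat p powi e"
    using assms(2) unfolding padic_ge_def by blast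
  obtain a' b' where ab': "b' \<noteq> 0" "\<not> int p dvd b'" "y = of_int a' / of_int b' * of_nat p powi e"
    using assms(3) unfolding padic_ge_def by blast
  have pr: "prime (int p)" using assms(1) by simp
  have "\<not> int p dvd b * b'" using ab(2) ab'(2) pr by (simp add: prime_dvd_mult_iff)
  moreover have "b * b' \<noteq> 0" using ab ab' by simp
  moreover have "x + y = of_int (a * b' + a' * b) / of_int (b * b') * of_nat p powi e"
    using ab ab' by (simp add: field_simps)
  ultimately show ?thesis unfolding padic_ge_def by blast
qed

lemma padic_ge_sum:
  assumes "prime p" "finite A" "\<forall>a\<in>A. padic_ge p (f a) e"
  shows "padic_ge p (sum f A) e"
  using assms(2,3)
proof (induction A rule: finite_induct)
  case empty then show ?case by (simp add: padic_ge_0 assms(1))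
next
  case (insert x F) then show ?case using padic_ge_add[OF assms(1)] by simp
qed

context L begin

definition Cset :: "nat set" where "Cset = {m\<in>{1..n}. lev m \<le> t}"

lemma Cset_dvd: "Cset = {m\<in>{1..n}. p ^ (s - t) dvd m}"
proof -
  have "lev m \<le> t \<longleftrightarrow> p ^ (s - t) dvd m" if "m \<in> {1..n}" for m
  proof -
    have "p ^ (s - t) dvd m \<longleftrightarrow> s - t \<le> multiplicity p m"
      by (rule power_dvd_iff_le_multiplicity) (use that prime in auto)
    then show ?thesis unfolding lev_def by auto
  qed
  then show ?thesis unfolding Cset_def by auto
qed

lemma card_Cset: "card Cset = numval p d t"
  unfolding Cset_dvd using count_mult[of "p ^ (s - t)" n] p0 numval_div_le[of t] st by simp

lemma Cset_fin: "finite Cset" unfolding Cset_def by auto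
lemma Cset_sub: "Cset \<subseteq> {1..n}" unfolding Cset_def by auto

lemma Cp_eq: "Cp p n s t = Cset"
proof -
  have "(\<exists>v\<in>{0..t}. multiplicity p m = s - v) \<longleftrightarrow> lev m \<le> t" if "m \<in> {1..n}" for m
  proof
    assume "\<exists>v\<in>{0..t}. multiplicity p m = s - v"
    then obtain v where "v \<le> t" "multiplicity p m = s - v" by auto
    then show "lev m \<le> t" unfolding lev_def using st by simp
  next
    assume "lev m \<le> t"
    then show "\<exists>v\<in>{0..t}. multiplicity p m = s - v"
      using mult_le[OF that] unfolding lev_def by (intro bexI[of _ "s - multiplicity p m"]) auto
  qed
  then show ?thesis unfolding Cp_def Ap_def Cset_def by auto
qed

lemma sum_lev_C: "(\<Sum>m\<in>Cset. lev m) = (\<Sum>w=0..t. Bp p d w * w)"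
proof -
  have "(\<Sum>m\<in>Cset. lev m) = (\<Sum>w\<in>{0..t}. \<Sum>m\<in>{m\<in>Cset. lev m = w}. lev m)"
    by (rule sum.group[symmetric]) (auto simp: Cset_fin Cset_def)
  also have "\<dots> = (\<Sum>w\<in>{0..t}. Bp p d w * w)"
  proof (intro sum.cong refl)
    fix w assume w: "w \<in> {0..t}"
    have "{m\<in>Cset. lev m = w} = Lev w" using w unfolding Cset_def Lev_def by auto
    then have "(\<Sum>m\<in>{m\<in>Cset. lev m = w}. lev m) = (\<Sum>m\<in>Lev w. w)" unfolding Lev_def by simp
    also have "\<dots> = Bp p d w * w" using card_Lev[of w] w st by simp
    finally show "(\<Sum>m\<in>{m\<in>Cset. lev m = w}. lev m) = Bp p d w * w" .
  qed
  finally show ?thesis by simp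
qed

lemma sum_lev_C_Up: "(\<Sum>m\<in>Cset. lev m) + t + 1 = Up p t e"
proof -
  have "Bp p d w = Bp p e w" if "w \<le> t" for w using de that by (intro Bp_cong) auto
  then show ?thesis unfolding Up_def sum_lev_C by simp
qed

lemma recip: assumes "m \<in> {1..n}"
  shows "(1::rat) / of_nat m = 1 / of_nat (pf m) * of_nat p ^ lev m / of_nat p ^ s"
proof -
  have ms: "multiplicity p m + lev m = s" using mult_le[OF assms] unfolding lev_def by simp
  have "(of_nat m :: rat) = of_nat (pf m) * of_nat p ^ multiplicity p m"
    using decomp[of m] by (metis of_nat_mult of_nat_power mult.commute)
  moreover have "(of_nat p ^ s :: rat) = of_nat p ^ multiplicity p m * of_nat p ^ lev m"
    using ms by (metis power_add)
  moreover have "(of_nat (pf m) :: rat) \<noteq> 0" using pf_pos[of m] assms by simp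
  moreover have "(of_nat p :: rat) \<noteq> 0" using p0 by simp
  ultimately show ?thesis by (simp add: field_simps)
qed

lemma T_form: assumes "S \<subseteq> {1..n}"
  shows "(1::rat) / (\<Prod>i\<in>S. of_nat i)
     = (\<Prod>m\<in>S. 1 / of_nat (pf m)) * of_nat p ^ (\<Sum>m\<in>S. lev m) / of_nat p ^ (card S * s)"
proof -
  have fin: "finite S" using assms finite_subset by blast
  have "(1::rat) / (\<Prod>i\<in>S. of_nat i) = (\<Prod>i\<in>S. 1 / of_nat i)"
    by (simp add: prod_dividef)
  also have "\<dots> = (\<Prod>m\<in>S. (1 / of_nat (pf m) * of_nat p ^ lev m) / of_nat p ^ s)"
    using assms by (intro prod.cong refl) (auto simp: recip)
  also have "\<dots> = (\<Prod>m\<in>S. 1 / of_nat (pf m)) * (\<Prod>m\<in>S. (of_nat p::rat) ^ lev m) / (\<Prod>m\<in>S. (of_nat p::rat) ^ s)"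
    by (simp add: prod_dividef prod.distrib)
  also have "\<dots> = (\<Prod>m\<in>S. 1 / of_nat (pf m)) * of_nat p ^ (\<Sum>m\<in>S. lev m) / of_nat p ^ (card S * s)"
    by (simp add: power_sum power_mult mult.commute)
  finally show ?thesis .
qed

lemma padic_term:
  assumes "S \<subseteq> {1..n}" "W \<ge> U"
  shows "padic_ge p ((\<Prod>m\<in>S. 1 / of_nat (pf m)) * of_nat p ^ W / of_nat p ^ K) (int U - int K)"
proof -
  have fin: "finite S" using assms finite_subset by blast
  define b where "b = (\<Prod>m\<in>S. int (pf m))"
  have pr: "prime (int p)" using prime by simp
  have "\<not> int p dvd b" unfolding b_def
  proof
    assume "int p dvd (\<Prod>m\<in>S. int (pf m))"
    then obtain m where "m \<in> S" "int p dvd int (pf m)" using pr fin by (auto simp: prime_dvd_prod_iff)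
    then show False using pf_ndvd[of m] assms(1) by auto
  qed
  moreover have bnz: "b \<noteq> 0" unfolding b_def using pf_pos assms(1) fin by (auto simp: prod_zero_iff)
  moreover have "(\<Prod>m\<in>S. 1 / of_nat (pf m)) * of_nat p ^ W / of_nat p ^ K
      = of_int (int p ^ (W - U)) / of_int b * (of_nat p :: rat) powi (int U - int K)"
  proof -
    have pz: "(of_nat p :: rat) \<noteq> 0" using p0 by simp
    have "(of_nat p :: rat) powi (int U - int K) = of_nat p ^ U / of_nat p ^ K"
      using pz by (simp add: power_int_diff)
    moreover have "(of_nat p :: rat) ^ W = of_nat p ^ (W - U) * of_nat p ^ U"
      using assms(2) by (metis le_add_diff_inverse2 power_add)
    moreover have "(\<Prod>m\<in>S. 1 / of_nat (pf m) :: rat) = 1 / of_int b"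
      unfolding b_def by (simp add: prod_dividef)
    ultimately show ?thesis using pz by simp
  qed
  ultimately show ?thesis unfolding padic_ge_def by blast
qed

end



lemma incr_trans0:
  fixes f :: "nat \<Rightarrow> nat"
  assumes "\<forall>i\<in>{1..<k}. f i < (f (i+1) :: nat)" "1 \<le> i"
  shows "i < j \<Longrightarrow> j \<le> k \<Longrightarrow> f i < f j"
proof (induction j)
  case 0 then show ?case by simp
next
  case (Suc j)
  show ?case
  proof (cases "i = j")
    case True then show ?thesis using assms(1,2) Suc.prems by auto
  next
    case False
    then have "f i < f j" using Suc by simp
    moreover have "f j < f (Suc j)" using assms(1,2) Suc.prems False by auto
    ultimately show ?thesis by simp
  qed
qed

lemma incr_trans:
  fixes f :: "nat \<Rightarrow> nat"
  assumes "\<forall>i\<in>{1..<k}. f i < (f (i+1) :: nat)" "1 \<le> i" "i < j" "j \<le> k"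
  shows "f i < f j"
  using incr_trans0[OF assms(1,2)] assms(3,4) by blast

lemma incr_inj:
  fixes f :: "nat \<Rightarrow> nat"
  assumes "\<forall>i\<in>{1..<k}. f i < (f (i+1) :: nat)"
  shows "inj_on f {1..k}"
proof (rule inj_onI)
  fix x y assume xy: "x \<in> {1..k}" "y \<in> {1..k}" "f x = f y"
  show "x = y"
  proof (rule ccontr)
    assume "x \<noteq> y"
    then consider "x < y" | "y < x" by linarith
    then show False
      using incr_trans[OF assms, of x y] incr_trans[OF assms, of y x] xy by cases auto
  qed
qed

lemma incr_exists:
  fixes f :: "nat \<Rightarrow> nat"
  assumes "finite S" "card S = k"
  shows "\<exists>f. (\<forall>i\<in>{1..<k}. f i < (f (i+1) :: nat)) \<and> f ` {1..k} = S"
proof -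
  define xs where "xs = sorted_list_of_set S"
  have len: "length xs = k" unfolding xs_def using assms by simp
  have sw: "sorted_wrt (<) xs" unfolding xs_def by simp
  have setx: "set xs = S" unfolding xs_def using assms by simp
  define f where "f i = xs ! (i - 1)" for i
  have "\<forall>i\<in>{1..<k}. f i < f (i+1)"
  proof
    fix i assume "i \<in> {1..<k}"
    then show "f i < f (i+1)" unfolding f_def using sorted_wrt_nth_less[OF sw, of "i - 1" i] len by auto
  qed
  moreover have "f ` {1..k} = S"
  proof -
    have "f ` {1..k} = (\<lambda>j. xs ! j) ` {..<k}"
    proof (intro equalityI subsetI)
      fix x assume "x \<in> f ` {1..k}"
      then obtain i where "i \<in> {1..k}" "x = f i" by blast
      then show "x \<in> (\<lambda>j. xs ! j) ` {..<k}" unfolding f_def by (intro image_eqI[of _ _ "i - 1"]) auto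
    next
      fix x assume "x \<in> (\<lambda>j. xs ! j) ` {..<k}"
      then obtain j where "j < k" "x = xs ! j" by blast
      then show "x \<in> f ` {1..k}" unfolding f_def by (intro image_eqI[of _ _ "Suc j"]) auto
    qed
    also have "\<dots> = set xs" using len by (auto simp: in_set_conv_nth)
    finally show ?thesis using setx by simp
  qed
  ultimately show ?thesis by blast
qed

lemma incr_list:
  fixes f :: "nat \<Rightarrow> nat"
  assumes "\<forall>i\<in>{1..<k}. f i < (f (i+1) :: nat)"
  shows "sorted_wrt (<) (map f [1..<Suc k])" "set (map f [1..<Suc k]) = f ` {1..k}"
proof -
  show "sorted_wrt (<) (map f [1..<Suc k])"
    unfolding sorted_wrt_iff_nth_less
  proof (intro allI impI)
    fix i j assume "i < j" "j < length (map f [1..<Suc k])"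
    then show "map f [1..<Suc k] ! i < map f [1..<Suc k] ! j"
      using incr_trans[OF assms, of "Suc i" "Suc j"] by (simp del: upt_Suc)
  qed
  show "set (map f [1..<Suc k]) = f ` {1..k}" by (auto simp del: upt_Suc)
qed

lemma incr_unique:
  fixes f g :: "nat \<Rightarrow> nat"
  assumes "\<forall>i\<in>{1..<k}. f i < (f (i+1) :: nat)" "\<forall>i\<in>{1..<k}. g i < (g (i+1) :: nat)"
    "f ` {1..k} = g ` {1..k}" "i \<in> {1..k}"
  shows "f i = g i"
proof -
  have "map f [1..<Suc k] = map g [1..<Suc k]"
    using incr_list[OF assms(1)] incr_list[OF assms(2)] assms(3)
    by (intro sorted_distinct_set_unique) (auto simp: strict_sorted_iff)
  then have "map f [1..<Suc k] ! (i - 1) = map g [1..<Suc k] ! (i - 1)" by (rule arg_cong)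
  then show ?thesis using assms(4) by (auto simp del: upt_Suc)
qed




context L begin

definition kk where "kk = numval p d t + 1"
abbreviation U where "U \<equiv> Up p t e"

lemma ord_iff:
  assumes "a \<le> s" "b \<le> s"
  shows "((of_nat x / of_nat p ^ a :: rat) < of_nat y / of_nat p ^ b) \<longleftrightarrow> p^(s-a)*x < p^(s-b)*y"
proof -
  have pz: "(of_nat p :: rat) > 0" using p0 by simp
  have ea: "(of_nat x / of_nat p ^ a :: rat) = of_nat (p^(s-a)*x) / of_nat p ^ s"
  proof -
    have "(of_nat p :: rat) ^ s = of_nat p ^ a * of_nat p ^ (s - a)"
      using assms(1) by (metis le_add_diff_inverse power_add)
    then show ?thesis using pz by (simp add: field_simps)
  qed
  have eb: "(of_nat y / of_nat p ^ b :: rat) = of_nat (p^(s-b)*y) / of_nat p ^ s"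
  proof -
    have "(of_nat p :: rat) ^ s = of_nat p ^ b * of_nat p ^ (s - b)"
      using assms(2) by (metis le_add_diff_inverse power_add)
    then show ?thesis using pz by (simp add: field_simps)
  qed
  have "(of_nat (p^(s-a)*x) / of_nat p ^ s :: rat) < of_nat (p^(s-b)*y) / of_nat p ^ s
        \<longleftrightarrow> (of_nat (p^(s-a)*x) :: rat) < of_nat (p^(s-b)*y)"
    using pz by (simp add: divide_less_cancel)
  also have "\<dots> \<longleftrightarrow> p^(s-a)*x < p^(s-b)*y" by (rule of_nat_less_iff)
  finally show ?thesis unfolding ea eb .
qed

definition Vs where "Vs v = {vs \<in> {1..kk} \<rightarrow>\<^sub>E {0..t+v}. (\<Sum>i\<in>{1..kk}. vs i) = U + v}"
definition Js where "Js v vs = {js \<in> (\<Pi>\<^sub>E i\<in>{1..kk}. Bset p d (vs i)).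
               \<forall>i\<in>{1..<kk}. (of_nat (js i) / of_nat p ^ vs i :: rat)
                              < of_nat (js (i+1)) / of_nat p ^ vs (i+1)}"

lemma Hprime_unf: "Hprime p kk t e d v = (\<Sum>vs\<in>Vs v. \<Sum>js\<in>Js v vs. 1 / (\<Prod>i\<in>{1..kk}. of_nat (js i)))"
  unfolding Hprime_def Vs_def Js_def by simp

definition Kp where "Kp v = {S. S \<subseteq> {1..n} \<and> card S = kk \<and> (\<Sum>m\<in>S. lev m) = U + v \<and> (\<forall>m\<in>S. lev m \<le> t+v)}"

definition G where "G x = (\<lambda>i. p ^ (s - fst x i) * snd x i) ` {1..kk}"

lemma mm_props:
  assumes "t+v < s" "vs \<in> Vs v" "js \<in> Js v vs"
  shows "\<forall>i\<in>{1..kk}. p^(s - vs i) * js i \<in> {1..n} \<and> lev (p^(s - vs i) * js i) = vs i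
            \<and> pf (p^(s - vs i) * js i) = js i \<and> vs i \<le> t + v"
    and "\<forall>i\<in>{1..<kk}. p^(s - vs i) * js i < p^(s - vs (i+1)) * js (i+1)"
proof -
  have vs: "vs i \<le> t + v" if "i \<in> {1..kk}" for i using assms(2) that unfolding Vs_def by auto
  have js: "js i \<in> J (vs i)" if "i \<in> {1..kk}" for i
    using assms(3) that Bset_eq[of "vs i"] vs[OF that] assms(1) unfolding Js_def by auto
  show "\<forall>i\<in>{1..kk}. p^(s - vs i) * js i \<in> {1..n} \<and> lev (p^(s - vs i) * js i) = vs i
            \<and> pf (p^(s - vs i) * js i) = js i \<and> vs i \<le> t + v"
  proof
    fix i assume i: "i \<in> {1..kk}"
    have w: "vs i \<le> s" using vs[OF i] assms(1) by simp
    have "p^(s - vs i) * js i \<in> Lev (vs i)" using Lev_eq[OF w] js[OF i] by blast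
    moreover have "pf (p^(s - vs i) * js i) = js i" using js[OF i] pf_pow unfolding J_def by auto
    ultimately show "p^(s - vs i) * js i \<in> {1..n} \<and> lev (p^(s - vs i) * js i) = vs i
            \<and> pf (p^(s - vs i) * js i) = js i \<and> vs i \<le> t + v" using vs[OF i] unfolding Lev_def by auto
  qed
  show "\<forall>i\<in>{1..<kk}. p^(s - vs i) * js i < p^(s - vs (i+1)) * js (i+1)"
  proof
    fix i assume i: "i \<in> {1..<kk}"
    then have "i \<in> {1..kk}" "i+1 \<in> {1..kk}" by auto
    then have "vs i \<le> s" "vs (i+1) \<le> s" using vs assms(1) by fastforce+
    moreover have "(of_nat (js i) / of_nat p ^ vs i :: rat) < of_nat (js (i+1)) / of_nat p ^ vs (i+1)"
      using assms(3) i unfolding Js_def by auto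
    ultimately show "p^(s - vs i) * js i < p^(s - vs (i+1)) * js (i+1)" using ord_iff by blast
  qed
qed

lemma G_in:
  assumes "t+v < s" "vs \<in> Vs v" "js \<in> Js v vs"
  shows "G (vs, js) \<in> Kp v"
    and "(\<Prod>m\<in>G (vs, js). 1 / of_nat (pf m) :: rat) = 1 / (\<Prod>i\<in>{1..kk}. of_nat (js i))"
proof -
  define mm where "mm i = p^(s - vs i) * js i" for i
  note P = mm_props[OF assms, folded mm_def]
  have inj: "inj_on mm {1..kk}" using incr_inj[OF P(2)] .
  have Gm: "G (vs, js) = mm ` {1..kk}" unfolding G_def mm_def by simp
  have "(\<Sum>m\<in>mm ` {1..kk}. lev m) = (\<Sum>i\<in>{1..kk}. lev (mm i))" by (rule sum.reindex[OF inj, unfolded comp_def])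
  also have "\<dots> = (\<Sum>i\<in>{1..kk}. vs i)" using P(1) by (intro sum.cong) auto
  also have "\<dots> = U + v" using assms(2) unfolding Vs_def by auto
  finally have sm: "(\<Sum>m\<in>mm ` {1..kk}. lev m) = U + v" .
  have "card (mm ` {1..kk}) = kk" using card_image[OF inj] by simp
  then show "G (vs, js) \<in> Kp v" unfolding Kp_def Gm using P(1) sm by auto
  have "(\<Prod>m\<in>mm ` {1..kk}. 1 / of_nat (pf m) :: rat) = (\<Prod>i\<in>{1..kk}. 1 / of_nat (pf (mm i)))"
    by (rule prod.reindex[OF inj, unfolded comp_def])
  also have "\<dots> = (\<Prod>i\<in>{1..kk}. 1 / of_nat (js i))" using P(1) by (intro prod.cong) auto
  also have "\<dots> = 1 / (\<Prod>i\<in>{1..kk}. of_nat (js i))" by (simp add: prod_dividef)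
  finally show "(\<Prod>m\<in>G (vs, js). 1 / of_nat (pf m) :: rat) = 1 / (\<Prod>i\<in>{1..kk}. of_nat (js i))"
    unfolding Gm .
qed

lemma G_inj: assumes "t+v < s" shows "inj_on G (SIGMA vs:Vs v. Js v vs)"
proof (rule inj_onI)
  fix x y assume x: "x \<in> (SIGMA vs:Vs v. Js v vs)" and y: "y \<in> (SIGMA vs:Vs v. Js v vs)" and eq: "G x = G y"
  obtain vs js where xe: "x = (vs, js)" "vs \<in> Vs v" "js \<in> Js v vs" using x by blast
  obtain vs' js' where ye: "y = (vs', js')" "vs' \<in> Vs v" "js' \<in> Js v vs'" using y by blast
  note P = mm_props[OF assms xe(2,3)]
  note P' = mm_props[OF assms ye(2,3)]
  have same: "p^(s - vs i) * js i = p^(s - vs' i) * js' i" if "i \<in> {1..kk}" for i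
    using incr_unique[OF P(2) P'(2) _ that] eq unfolding xe ye G_def by simp
  have "vs i = vs' i" if "i \<in> {1..kk}" for i using P(1) P'(1) same[OF that] that by metis
  then have "vs = vs'" using xe(2) ye(2) unfolding Vs_def by (intro PiE_ext) auto
  have "js i = js' i" if "i \<in> {1..kk}" for i using P(1) P'(1) same[OF that] that by metis
  then have "js = js'" using xe(3) ye(3) unfolding Js_def by (intro extensionalityI[of _ "{1..kk}"]) (auto simp: PiE_iff)
  then show "x = y" using xe ye \<open>vs = vs'\<close> by simp
qed

lemma G_surj: assumes "t+v < s" shows "Kp v \<subseteq> G ` (SIGMA vs:Vs v. Js v vs)"
proof
  fix S assume S: "S \<in> Kp v"
  then have fin: "finite S" unfolding Kp_def using finite_subset by blast
  obtain f where f: "\<forall>i\<in>{1..<kk}. f i < f (i+1)" "f ` {1..kk} = S"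
    using incr_exists[OF fin, of kk] S unfolding Kp_def by auto
  have inj: "inj_on f {1..kk}" using incr_inj[OF f(1)] .
  define vs where "vs = restrict (\<lambda>i. lev (f i)) {1..kk}"
  define js where "js = restrict (\<lambda>i. pf (f i)) {1..kk}"
  have fi: "f i \<in> {1..n}" "lev (f i) \<le> t + v" if "i \<in> {1..kk}" for i
  proof -
    have "f i \<in> S" using f(2) that by blast
    then show "f i \<in> {1..n}" "lev (f i) \<le> t + v" using S unfolding Kp_def by auto
  qed
  have lv: "lev (f i) \<le> s" for i unfolding lev_def by simp
  have fL: "pf (f i) \<in> J (lev (f i))" "f i = p ^ (s - lev (f i)) * pf (f i)" if "i \<in> {1..kk}" for i
    using pf_Lev[OF lv, of "f i"] fi[OF that] unfolding Lev_def by auto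
  have "vs \<in> Vs v"
  proof -
    have "(\<Sum>i\<in>{1..kk}. vs i) = (\<Sum>i\<in>{1..kk}. lev (f i))" unfolding vs_def by simp
    also have "\<dots> = (\<Sum>m\<in>S. lev m)" using sum.reindex[OF inj, of lev] f(2) by (simp add: comp_def)
    also have "\<dots> = U + v" using S unfolding Kp_def by auto
    finally show ?thesis unfolding Vs_def vs_def using fi by (auto simp: PiE_iff)
  qed
  moreover have "js \<in> Js v vs"
  proof -
    have "js \<in> (\<Pi>\<^sub>E i\<in>{1..kk}. Bset p d (vs i))"
      using fL Bset_eq[OF lv] unfolding js_def vs_def by (auto simp: PiE_iff)
    moreover have "(of_nat (js i) / of_nat p ^ vs i :: rat) < of_nat (js (i+1)) / of_nat p ^ vs (i+1)"
      if i: "i \<in> {1..<kk}" for i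
    proof -
      have ii: "i \<in> {1..kk}" "i+1 \<in> {1..kk}" using i by auto
      have "p^(s - vs i) * js i < p^(s - vs (i+1)) * js (i+1)"
        using f(1) i fL(2)[OF ii(1)] fL(2)[OF ii(2)] ii unfolding vs_def js_def by simp
      then show ?thesis using ord_iff[of "vs i" "vs (i+1)"] lv unfolding vs_def using ii by simp
    qed
    ultimately show ?thesis unfolding Js_def by auto
  qed
  moreover have "G (vs, js) = S"
  proof -
    have "G (vs, js) = (\<lambda>i. p ^ (s - vs i) * js i) ` {1..kk}" unfolding G_def by simp
    also have "\<dots> = f ` {1..kk}" using fL(2) unfolding vs_def js_def by (intro image_cong) auto
    finally show ?thesis using f(2) by simp
  qed
  ultimately show "S \<in> G ` (SIGMA vs:Vs v. Js v vs)" by blast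
qed

lemma Bset_fin: "finite (Bset p d w)" unfolding Bset_def by (rule finite_image_set) simp

lemma Hprime_Kp:
  assumes "t+v < s"
  shows "Hprime p kk t e d v = (\<Sum>S\<in>Kp v. \<Prod>m\<in>S. 1 / of_nat (pf m))"
proof -
  have finV: "finite (Vs v)"
  proof -
    have "finite ({1..kk} \<rightarrow>\<^sub>E {0..t+v})" by (rule finite_PiE) auto
    then show ?thesis unfolding Vs_def by simp
  qed
  have finJ: "finite (Js v vs)" for vs
  proof -
    have "finite (\<Pi>\<^sub>E i\<in>{1..kk}. Bset p d (vs i))" by (rule finite_PiE) (auto simp: Bset_fin)
    then show ?thesis unfolding Js_def by simp
  qed
  have "Hprime p kk t e d v = (\<Sum>(vs, js)\<in>(SIGMA vs:Vs v. Js v vs). 1 / (\<Prod>i\<in>{1..kk}. of_nat (js i)))"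
    unfolding Hprime_unf using finV finJ by (simp add: sum.Sigma)
  also have "\<dots> = (\<Sum>x\<in>(SIGMA vs:Vs v. Js v vs). \<Prod>m\<in>G x. 1 / of_nat (pf m))"
    using G_in(2)[OF assms] by (intro sum.cong) auto
  also have "\<dots> = (\<Sum>S\<in>Kp v. \<Prod>m\<in>S. 1 / of_nat (pf m))"
  proof (rule sum.reindex_bij_betw)
    show "bij_betw G (SIGMA vs:Vs v. Js v vs) (Kp v)"
      unfolding bij_betw_def using G_inj[OF assms] G_surj[OF assms] G_in(1)[OF assms] by blast
  qed
  finally show ?thesis .
qed

end



context L begin

definition K where "K = {S. S \<subseteq> {1..n} \<and> card S = kk}"
definition Tt :: "nat set \<Rightarrow> rat" where "Tt S = 1 / (\<Prod>i\<in>S. of_nat i)"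

lemma card_C_kk: "card Cset = kk - 1" unfolding kk_def card_Cset by simp

lemma Cs_U: "(\<Sum>m\<in>Cset. lev m) + t + 1 = U" using sum_lev_C_Up .

lemma key_ineq:
  assumes "A \<subseteq> {1..n}" "card A = card Cset"
  shows "(\<Sum>m\<in>A. lev m) \<ge> (\<Sum>m\<in>Cset. lev m) + card (A - Cset)"
proof -
  have finA: "finite A" using assms(1) finite_subset by blast
  have finC: "finite Cset" by (rule Cset_fin)
  have c: "card (A - Cset) = card (Cset - A)"
  proof -
    have "card (A - Cset) = card A - card (A \<inter> Cset)" using finA by (simp add: card_Diff_subset_Int Int_commute)
    moreover have "card (Cset - A) = card Cset - card (Cset \<inter> A)" using finC by (simp add: card_Diff_subset_Int Int_commute)
    ultimately show ?thesis using assms(2) by (simp add: Int_commute)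
  qed
  have gt: "lev m \<ge> t + 1" if "m \<in> A - Cset" for m using that assms(1) unfolding Cset_def by auto
  have le: "lev m \<le> t" if "m \<in> Cset - A" for m using that unfolding Cset_def by auto
  have sA: "(\<Sum>m\<in>A. lev m) = (\<Sum>m\<in>A \<inter> Cset. lev m) + (\<Sum>m\<in>A - Cset. lev m)"
    using finA by (metis sum.Int_Diff)
  have sC: "(\<Sum>m\<in>Cset. lev m) = (\<Sum>m\<in>A \<inter> Cset. lev m) + (\<Sum>m\<in>Cset - A. lev m)"
    using finC by (metis sum.Int_Diff Int_commute)
  have "(\<Sum>m\<in>A - Cset. lev m) \<ge> (\<Sum>m\<in>A - Cset. t + 1)" using gt by (intro sum_mono) auto
  then have 1: "(\<Sum>m\<in>A - Cset. lev m) \<ge> (t + 1) * card (A - Cset)" by (simp add: mult.commute)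
  have "(\<Sum>m\<in>Cset - A. lev m) \<le> (\<Sum>m\<in>Cset - A. t)" using le by (intro sum_mono) auto
  then have 2: "(\<Sum>m\<in>Cset - A. lev m) \<le> t * card (A - Cset)" using c by (simp add: mult.commute)
  show ?thesis using sA sC 1 2 by (simp add: algebra_simps)
qed

lemma maxdecomp:
  assumes "S \<in> K"
  shows "\<exists>x\<in>S. (\<forall>m\<in>S. lev m \<le> lev x) \<and> lev x + (\<Sum>m\<in>Cset. lev m) + card (S - {x} - Cset) \<le> (\<Sum>m\<in>S. lev m)"
proof -
  have S: "S \<subseteq> {1..n}" "card S = kk" using assms unfolding K_def by auto
  have fin: "finite S" using S(1) finite_subset by blast
  have ne: "S \<noteq> {}" using S(2) unfolding kk_def by auto
  obtain x where x: "x \<in> S" "\<forall>m\<in>S. lev m \<le> lev x"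
  proof -
    have "lev ` S \<noteq> {}" "finite (lev ` S)" using ne fin by auto
    then have "Max (lev ` S) \<in> lev ` S" using Max_in by blast
    then obtain x where "x \<in> S" "lev x = Max (lev ` S)" by auto
    moreover have "\<forall>m\<in>S. lev m \<le> Max (lev ` S)" using fin by auto
    ultimately show ?thesis using that by auto
  qed
  have A: "S - {x} \<subseteq> {1..n}" "card (S - {x}) = card Cset" using S x(1) fin card_C_kk by auto
  have "(\<Sum>m\<in>S. lev m) = lev x + (\<Sum>m\<in>S - {x}. lev m)" using fin x(1) by (simp add: sum.remove)
  then show ?thesis using key_ineq[OF A] x by auto
qed

lemma W_ge: assumes "S \<in> K" shows "(\<Sum>m\<in>S. lev m) \<ge> U"
proof -
  obtain x where x: "x \<in> S" "\<forall>m\<in>S. lev m \<le> lev x"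
      "lev x + (\<Sum>m\<in>Cset. lev m) + card (S - {x} - Cset) \<le> (\<Sum>m\<in>S. lev m)"
    using maxdecomp[OF assms] by blast
  have S: "S \<subseteq> {1..n}" "card S = kk" using assms unfolding K_def by auto
  have "lev x \<ge> t + 1"
  proof (rule ccontr)
    assume "\<not> lev x \<ge> t + 1"
    then have "S \<subseteq> Cset" using x(2) S(1) unfolding Cset_def by fastforce
    then have "card S \<le> card Cset" using Cset_fin by (rule card_mono[rotated])
    then show False using S(2) card_C_kk unfolding kk_def by simp
  qed
  then show ?thesis using x(3) Cs_U by simp
qed

lemma classify:
  assumes "S \<in> K" "(\<Sum>m\<in>S. lev m) = U + v"
  shows "S \<in> Kp v \<or> (\<exists>x\<in>Lev (t+v+1). S = insert x Cset)"
proof -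
  obtain x where x: "x \<in> S" "\<forall>m\<in>S. lev m \<le> lev x"
      "lev x + (\<Sum>m\<in>Cset. lev m) + card (S - {x} - Cset) \<le> (\<Sum>m\<in>S. lev m)"
    using maxdecomp[OF assms(1)] by blast
  have S: "S \<subseteq> {1..n}" "card S = kk" using assms unfolding K_def by auto
  have fin: "finite S" using S(1) finite_subset by blast
  show ?thesis
  proof (cases "lev x \<le> t + v")
    case True
    then have "S \<in> Kp v" using x(2) S assms(2) unfolding Kp_def by auto
    then show ?thesis by simp
  next
    case False
    have ineq: "lev x + card (S - {x} - Cset) \<le> t + 1 + v" using x(3) assms(2) Cs_U by simp
    then have lx: "lev x = t + v + 1" and c0: "card (S - {x} - Cset) = 0" using False by auto
    have "S - {x} \<subseteq> Cset" using c0 fin by auto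
    moreover have "card (S - {x}) = card Cset" using S x(1) fin card_C_kk by auto
    ultimately have "S - {x} = Cset" using Cset_fin by (intro card_subset_eq) auto
    then have "S = insert x Cset" using x(1) by auto
    moreover have "x \<in> Lev (t+v+1)" using lx x(1) S(1) unfolding Lev_def by auto
    ultimately show ?thesis by blast
  qed
qed

lemma ins_props:
  assumes "x \<in> Lev (t+v+1)"
  shows "insert x Cset \<in> K" "(\<Sum>m\<in>insert x Cset. lev m) = U + v" "insert x Cset \<notin> Kp v" "x \<notin> Cset"
proof -
  have x: "x \<in> {1..n}" "lev x = t + v + 1" using assms unfolding Lev_def by auto
  show xn: "x \<notin> Cset" using x unfolding Cset_def by auto
  have "card (insert x Cset) = kk" using xn Cset_fin card_C_kk unfolding kk_def by simp
  then show "insert x Cset \<in> K" unfolding K_def using x Cset_sub by auto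
  show "(\<Sum>m\<in>insert x Cset. lev m) = U + v" using xn Cset_fin x Cs_U by simp
  show "insert x Cset \<notin> Kp v" using x unfolding Kp_def by auto
qed

lemma Lev_sum: assumes "w \<le> s" shows "(\<Sum>x\<in>Lev w. 1 / of_nat (pf x) :: rat) = (\<Sum>j\<in>Bset p d w. 1 / of_nat j)"
proof -
  have "(\<Sum>x\<in>Lev w. 1 / of_nat (pf x) :: rat) = (\<Sum>j\<in>J w. 1 / of_nat (pf (p ^ (s - w) * j)))"
    unfolding Lev_eq[OF assms] by (rule sum.reindex[OF Lev_inj, unfolded comp_def])
  also have "\<dots> = (\<Sum>j\<in>J w. 1 / of_nat j)" using pf_pow unfolding J_def by (intro sum.cong) auto
  finally show ?thesis using Bset_eq[OF assms] by simp
qed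

lemma Pip_eq: "Pip p n s t = (\<Prod>m\<in>Cset. 1 / of_nat (pf m))"
  unfolding Pip_def Cp_eq pf_def ..

lemma sum_Kv:
  assumes "t + v < s"
  shows "(\<Sum>S\<in>{S\<in>K. (\<Sum>m\<in>S. lev m) = U + v}. Tt S)
       = Hp p n s t kk e d v * of_nat p ^ (U + v) / of_nat p ^ (kk * s)"
proof -
  define Ins where "Ins = (\<lambda>x. insert x Cset) ` Lev (t+v+1)"
  have split: "{S\<in>K. (\<Sum>m\<in>S. lev m) = U + v} = Kp v \<union> Ins"
  proof (intro equalityI subsetI)
    fix S assume "S \<in> {S\<in>K. (\<Sum>m\<in>S. lev m) = U + v}"
    then show "S \<in> Kp v \<union> Ins" using classify unfolding Ins_def by blast
  next
    fix S assume "S \<in> Kp v \<union> Ins"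
    then show "S \<in> {S\<in>K. (\<Sum>m\<in>S. lev m) = U + v}"
      using ins_props unfolding Ins_def Kp_def K_def by auto
  qed
  have disj: "Kp v \<inter> Ins = {}" using ins_props(3) unfolding Ins_def by auto
  have finKp: "finite (Kp v)"
  proof -
    have "Kp v \<subseteq> Pow {1..n}" unfolding Kp_def by auto
    then show ?thesis by (rule finite_subset) simp
  qed
  have finLev: "finite (Lev w)" for w unfolding Lev_def by auto
  have finIns: "finite Ins" unfolding Ins_def using finLev by simp
  have pz: "(of_nat p :: rat) \<noteq> 0" using p0 by simp
  have part1: "(\<Sum>S\<in>Kp v. Tt S) = Hprime p kk t e d v * of_nat p ^ (U + v) / of_nat p ^ (kk * s)"
  proof -
    have "(\<Sum>S\<in>Kp v. Tt S) = (\<Sum>S\<in>Kp v. (\<Prod>m\<in>S. 1 / of_nat (pf m)) * of_nat p ^ (U + v) / of_nat p ^ (kk * s))"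
      unfolding Tt_def by (intro sum.cong refl) (auto simp: Kp_def T_form)
    also have "\<dots> = (\<Sum>S\<in>Kp v. \<Prod>m\<in>S. 1 / of_nat (pf m)) * of_nat p ^ (U + v) / of_nat p ^ (kk * s)"
      by (simp add: sum_distrib_right sum_divide_distrib)
    finally show ?thesis using Hprime_Kp[OF assms] by simp
  qed
  have w: "t + v + 1 \<le> s" using assms by simp
  have part2: "(\<Sum>S\<in>Ins. Tt S) = Pip p n s t * (\<Sum>j\<in>Bset p d (t+v+1). 1 / of_nat j) * of_nat p ^ (U + v) / of_nat p ^ (kk * s)"
  proof -
    have inj: "inj_on (\<lambda>x. insert x Cset) (Lev (t+v+1))"
    proof (rule inj_onI)
      fix x y assume "x \<in> Lev (t+v+1)" "y \<in> Lev (t+v+1)" "insert x Cset = insert y Cset"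
      then show "x = y" using ins_props(4) by blast
    qed
    have TC: "Tt Cset = Pip p n s t * of_nat p ^ (\<Sum>m\<in>Cset. lev m) / of_nat p ^ ((kk - 1) * s)"
      unfolding Tt_def T_form[OF Cset_sub] Pip_eq card_C_kk ..
    have "(\<Sum>S\<in>Ins. Tt S) = (\<Sum>x\<in>Lev (t+v+1). Tt (insert x Cset))"
      unfolding Ins_def by (rule sum.reindex[OF inj, unfolded comp_def])
    also have "\<dots> = (\<Sum>x\<in>Lev (t+v+1). (1 / of_nat (pf x) * of_nat p ^ (t+v+1) / of_nat p ^ s) * Tt Cset)"
    proof (intro sum.cong refl)
      fix x assume x: "x \<in> Lev (t+v+1)"
      have xn: "x \<notin> Cset" using ins_props(4)[OF x] .
      have x1: "x \<in> {1..n}" "lev x = t+v+1" using x unfolding Lev_def by auto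
      have "Tt (insert x Cset) = (1 / of_nat x) * Tt Cset"
        unfolding Tt_def using xn Cset_fin by simp
      then show "Tt (insert x Cset) = (1 / of_nat (pf x) * of_nat p ^ (t+v+1) / of_nat p ^ s) * Tt Cset"
        using recip[OF x1(1)] x1(2) by simp
    qed
    also have "\<dots> = (\<Sum>x\<in>Lev (t+v+1). 1 / of_nat (pf x)) * (of_nat p ^ (t+v+1) / of_nat p ^ s * Tt Cset)"
      unfolding sum_distrib_right by (intro sum.cong refl) simp
    also have "\<dots> = (\<Sum>j\<in>Bset p d (t+v+1). 1 / of_nat j) * (of_nat p ^ (t+v+1) / of_nat p ^ s * Tt Cset)"
      using Lev_sum[OF w] by simp
    also have "of_nat p ^ (t+v+1) / of_nat p ^ s * Tt Cset
        = Pip p n s t * of_nat p ^ (U + v) / (of_nat p :: rat) ^ (kk * s)"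
    proof -
      have e1: "(of_nat p :: rat) ^ (t+v+1) * of_nat p ^ (\<Sum>m\<in>Cset. lev m) = of_nat p ^ (U + v)"
        using Cs_U by (metis power_add add.commute add.left_commute)
      have kk1: "kk = (kk - 1) + 1" unfolding kk_def by simp
      have e2: "(of_nat p :: rat) ^ s * of_nat p ^ ((kk - 1) * s) = of_nat p ^ (kk * s)"
      proof -
        have "s + (kk - 1) * s = kk * s" unfolding kk_def by simp
        then show ?thesis by (metis power_add)
      qed
      show ?thesis unfolding TC using e1[symmetric] e2[symmetric] pz by (simp add: field_simps)
    qed
    finally show ?thesis by (simp add: algebra_simps)
  qed
  have "(\<Sum>S\<in>{S\<in>K. (\<Sum>m\<in>S. lev m) = U + v}. Tt S) = (\<Sum>S\<in>Kp v. Tt S) + (\<Sum>S\<in>Ins. Tt S)"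
    unfolding split using finKp finIns disj by (rule sum.union_disjoint)
  also have "\<dots> = Hp p n s t kk e d v * of_nat p ^ (U + v) / of_nat p ^ (kk * s)"
    unfolding part1 part2 Hp_def by (simp add: algebra_simps add_divide_distrib)
  finally show ?thesis .
qed

end



context L begin

lemma main:
  "padic_ge p (Hnk n kk - (\<Sum>v=0..s-t-1. Hp p n s t kk e d v
       * of_nat p powi (int v - int kk * int s + int U)))
     (int s - int t - int kk * int s + int U)"
proof -
  let ?W = "\<lambda>S. \<Sum>m\<in>S. lev m"
  have finK: "finite K"
  proof -
    have "K \<subseteq> Pow {1..n}" unfolding K_def by auto
    then show ?thesis by (rule finite_subset) simp
  qed
  define A where "A = {S\<in>K. ?W S < U + (s - t)}"
  define B where "B = {S\<in>K. \<not> ?W S < U + (s - t)}"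
  have pz: "(of_nat p :: rat) \<noteq> 0" using p0 by simp
  have H: "Hnk n kk = (\<Sum>S\<in>K. Tt S)" unfolding Hnk_def K_def Tt_def ..
  have KAB: "K = A \<union> B" "A \<inter> B = {}" unfolding A_def B_def by auto
  have finA: "finite A" "finite B" using finK unfolding A_def B_def by auto
  have HAB: "(\<Sum>S\<in>K. Tt S) = (\<Sum>S\<in>A. Tt S) + (\<Sum>S\<in>B. Tt S)"
    unfolding KAB(1) using finA KAB(2) by (rule sum.union_disjoint)
  have "(\<Sum>S\<in>A. Tt S) = (\<Sum>v\<in>{0..s-t-1}. \<Sum>S\<in>{S\<in>A. ?W S - U = v}. Tt S)"
  proof (rule sum.group[symmetric])
    show "finite A" by (rule finA)
    show "finite {0..s-t-1}" by simp
    show "(\<lambda>S. ?W S - U) ` A \<subseteq> {0..s-t-1}" using W_ge unfolding A_def by fastforce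
  qed
  also have "\<dots> = (\<Sum>v\<in>{0..s-t-1}. Hp p n s t kk e d v * of_nat p powi (int v - int kk * int s + int U))"
  proof (intro sum.cong refl)
    fix v assume v: "v \<in> {0..s-t-1}"
    then have tv: "t + v < s" using st by auto
    have "{S\<in>A. ?W S - U = v} = {S\<in>K. ?W S = U + v}"
      using W_ge v st unfolding A_def by fastforce
    then have "(\<Sum>S\<in>{S\<in>A. ?W S - U = v}. Tt S) = Hp p n s t kk e d v * of_nat p ^ (U + v) / of_nat p ^ (kk * s)"
      using sum_Kv[OF tv] by simp
    moreover have "of_nat p ^ (U + v) / of_nat p ^ (kk * s) = (of_nat p :: rat) powi (int v - int kk * int s + int U)"
    proof -
      have ex: "int v - int kk * int s + int U = int (U + v) - int (kk * s)" by simp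
      moreover have "(of_nat p :: rat) powi (int (U + v) - int (kk * s)) = of_nat p ^ (U + v) / of_nat p ^ (kk * s)"
      proof -
        have "(of_nat p :: rat) powi (int (U + v) - int (kk * s)) = of_nat p powi int (U+v) / of_nat p powi int (kk*s)"
          by (rule power_int_diff) (use pz in simp)
        then show ?thesis by (simp only: power_int_of_nat)
      qed
      then show ?thesis by (simp only: ex)
    qed
    ultimately show "(\<Sum>S\<in>{S\<in>A. ?W S - U = v}. Tt S) = Hp p n s t kk e d v * of_nat p powi (int v - int kk * int s + int U)"
      by (metis times_divide_eq_right)
  qed
  finally have diff: "Hnk n kk - (\<Sum>v=0..s-t-1. Hp p n s t kk e d v
       * of_nat p powi (int v - int kk * int s + int U)) = (\<Sum>S\<in>B. Tt S)"
    using H HAB by simp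
  have pad: "padic_ge p (\<Sum>S\<in>B. Tt S) (int (U + (s - t)) - int (kk * s))"
  proof (rule padic_ge_sum[OF prime finA(2)], intro ballI)
    fix S assume S: "S \<in> B"
    then have S1: "S \<subseteq> {1..n}" "card S = kk" "?W S \<ge> U + (s - t)" unfolding B_def K_def by auto
    have "Tt S = (\<Prod>m\<in>S. 1 / of_nat (pf m)) * of_nat p ^ ?W S / of_nat p ^ (kk * s)"
      unfolding Tt_def T_form[OF S1(1)] S1(2) ..
    then show "padic_ge p (Tt S) (int (U + (s - t)) - int (kk * s))"
      using padic_term[OF S1(1) S1(3), of "kk * s"] by (simp only:)
  qed
  have eqn: "int (U + (s - t)) - int (kk * s) = int s - int t - int kk * int s + int U"
    using st by simp
  show ?thesis unfolding diff using pad unfolding eqn .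
qed

end

theorem lemma3p2:
  fixes p k n s t :: nat and e d :: "nat \<Rightarrow> nat"
  assumes "prime p"
    and "\<forall>i\<le>t. e i < p" and "e 0 \<noteq> 0"
    and "k = numval p e t + 1" and "k \<ge> 2"
    and "\<forall>i\<le>s. d i < p" and "d 0 \<noteq> 0"
    and "n = numval p d s" and "s \<ge> t + 1"
    and "\<forall>i\<le>t. d i = e i"
  shows "padic_ge p
           (Hnk n k - (\<Sum>v=0..s-t-1. Hp p n s t k e d v
               * of_nat p powi (int v - int k * int s + int (Up p t e))))
           (int s - int t - int k * int s + int (Up p t e))"
proof -
  interpret L p n s t d e
    using assms by unfold_locales auto
  have "k = kk" unfolding kk_def assms(4) using numval_cong[of t e d p] assms(10) by simp
  then show ?thesis using main by simp
qed


end
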